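(* Let $F,G$ be absolutely continuous distribution functions with densities $f,g$. Let $X_1,\ldots,X_{n_1}$ be independent random variables with $P(X_i\leq x)=[F(x)]^{\alpha_i}$ for $i=1,\ldots,p_1$ and $P(X_i\leq x)=[G(x)]^{\alpha_i}$ for $i=p_1+1,\ldots,n_1$, and let $Y_1,\ldots,Y_{n_2}$ be independent random variables with $P(Y_i\leq x)=[F(x)]^{\beta_i}$ for $i=1,\ldots,p_2$ and $P(Y_i\leq x)=[G(x)]^{\beta_i}$ for $i=p_2+1,\ldots,n_2$, all $\alpha_i,\beta_i>0$. If $\sum_{i=1}^{p_1}\alpha_i>\sum_{i=1}^{p_2}\beta_i$ and $\sum_{i=p_1+1}^{n_1}\alpha_i>\sum_{i=p_2+1}^{n_2}\beta_i$, then $X_{n_1:n_1}\geq_{rh}Y_{n_2:n_2}$.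
   Context: $X_{n:n}=\max(X_1,\ldots,X_n)$. For $X\sim F_X$, $Y\sim F_Y$, $Y\leq_{rh}X$ (equivalently $X\geq_{rh}Y$; reversed hazard rate order) means $F_X(x)/F_Y(x)$ is increasing in $x$ over the union of the supports. *)

theory Defs
  imports "HOL-Probability.Probability"
begin

definition abs_cont_cdf :: "(real \<Rightarrow> real) \<Rightarrow> (real \<Rightarrow> real) \<Rightarrow> bool" where
  "abs_cont_cdf F f \<longleftrightarrow>
     f \<in> borel_measurable lborel \<and> (\<forall>x. 0 \<le> f x) \<and> integrable lborel f \<and>
     integral\<^sup>L lborel f = 1 \<and> (\<forall>x. F x = (LINT t:{..x}|lborel. f t))"

definition cdf_ratio :: "(real \<Rightarrow> real) \<Rightarrow> (real \<Rightarrow> real) \<Rightarrow> real \<Rightarrow> ereal" where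
  "cdf_ratio FX FY x = (if FY x = 0 then \<infinity> else ereal (FX x / FY x))"

text \<open>Reversed hazard rate order: FY \<le>rh FX iff FX/FY is increasing on the union of the
  supports, i.e. on the points where FX or FY is positive.\<close>
definition rh_le :: "(real \<Rightarrow> real) \<Rightarrow> (real \<Rightarrow> real) \<Rightarrow> bool" where
  "rh_le FY FX \<longleftrightarrow>
     (\<forall>x y. x \<le> y \<and> (0 < FX x \<or> 0 < FY x) \<longrightarrow> cdf_ratio FX FY x \<le> cdf_ratio FX FY y)"

definition max_cdf :: "'a measure \<Rightarrow> (nat \<Rightarrow> 'a \<Rightarrow> real) \<Rightarrow> nat \<Rightarrow> real \<Rightarrow> real" where
  "max_cdf M X n x = measure M {\<omega> \<in> space M. Max ((\<lambda>i. X i \<omega>) ` {1..n}) \<le> x}"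

end

theory Submission imports Defs begin
definition PF :: "nat set \<Rightarrow> (nat \<Rightarrow> real) \<Rightarrow> real \<Rightarrow> real" where
  "PF S w u = (\<Prod>i\<in>S. u powr w i)"

lemma PF_nonneg: "0 \<le> PF S w u"
  unfolding PF_def by (intro prod_nonneg) auto

lemma PF_mono: assumes "\<forall>i\<in>S. 0 < w i" "0 \<le> u" "u \<le> u'" shows "PF S w u \<le> PF S w u'"
  unfolding PF_def using assms by (intro prod_mono) (auto intro: powr_mono2 less_imp_le)

lemma PF_pos: assumes "0 < u" "finite S" shows "PF S w u = u powr sum w S"
  unfolding PF_def using assms by (simp add: powr_sum)

lemma PF_zero: assumes "S \<noteq> {}" "finite S" shows "PF S w 0 = 0"
  unfolding PF_def using assms by auto

lemma PF_pos_imp: assumes "0 < PF S w u" "S \<noteq> {}" "finite S" "0 \<le> u" shows "0 < u"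
proof (rule ccontr)
  assume "\<not> 0 < u" then have "u = 0" using assms by auto
  then show False using assms PF_zero by auto
qed

lemma ratio_mono:
  assumes "finite S1" "finite S2" "S1 \<noteq> {}" "sum a S1 > sum b S2"
    "0 \<le> u" "u \<le> u'" "0 < PF S2 b u" "0 < PF S2 b u'"
  shows "PF S1 a u / PF S2 b u \<le> PF S1 a u' / PF S2 b u'"
proof (cases "u = 0")
  case True
  then show ?thesis using PF_zero[OF assms(3,1)] PF_nonneg by simp
next
  case False
  then have u: "0 < u" "0 < u'" using assms by auto
  have "PF S1 a u / PF S2 b u = u powr (sum a S1 - sum b S2)"
    using u assms by (simp add: PF_pos powr_diff)
  also have "\<dots> \<le> u' powr (sum a S1 - sum b S2)"
    using assms u by (intro powr_mono2) auto
  also have "\<dots> = PF S1 a u' / PF S2 b u'"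
    using u assms by (simp add: PF_pos powr_diff)
  finally show ?thesis .
qed

lemma key:
  fixes F G :: "real \<Rightarrow> real"
  assumes mF: "mono F" and mG: "mono G" and nF: "\<And>x. 0 \<le> F x" and nG: "\<And>x. 0 \<le> G x"
    and fin: "finite A1" "finite A2" "finite B1" "finite B2"
    and ne: "A1 \<noteq> {}" "B1 \<noteq> {}"
    and pa: "\<forall>i\<in>A1 \<union> B1. 0 < \<alpha> i" and pb: "\<forall>i\<in>A2 \<union> B2. 0 < \<beta> i"
    and sA: "sum \<alpha> A1 > sum \<beta> A2" and sB: "sum \<alpha> B1 > sum \<beta> B2"
  shows "rh_le (\<lambda>x. PF A2 \<beta> (F x) * PF B2 \<beta> (G x)) (\<lambda>x. PF A1 \<alpha> (F x) * PF B1 \<alpha> (G x))"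
  unfolding rh_le_def
proof (intro allI impI, elim conjE)
  fix x y :: real assume xy: "x \<le> y"
    and pos: "0 < PF A1 \<alpha> (F x) * PF B1 \<alpha> (G x) \<or> 0 < PF A2 \<beta> (F x) * PF B2 \<beta> (G x)"
  have Fxy: "F x \<le> F y" and Gxy: "G x \<le> G y" using xy mF mG by (auto simp: mono_def)
  have FY: "0 < PF A2 \<beta> (F x) * PF B2 \<beta> (G x)"
  proof (rule ccontr)
    assume "\<not> ?thesis"
    then have "PF A2 \<beta> (F x) = 0 \<or> PF B2 \<beta> (G x) = 0"
      using PF_nonneg[of A2 \<beta> "F x"] PF_nonneg[of B2 \<beta> "G x"]
      by (metis mult_pos_pos order_le_less)
    then have "F x = 0 \<or> G x = 0"
      unfolding PF_def using fin by (auto simp: prod_zero_iff)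
    then have "PF A1 \<alpha> (F x) * PF B1 \<alpha> (G x) = 0"
      using PF_zero[OF ne(1) fin(1)] PF_zero[OF ne(2) fin(3)] by auto
    with pos \<open>\<not> ?thesis\<close> show False by auto
  qed
  have p2x: "0 < PF A2 \<beta> (F x)" "0 < PF B2 \<beta> (G x)"
    using FY PF_nonneg[of A2 \<beta> "F x"] PF_nonneg[of B2 \<beta> "G x"]
    by (auto simp: zero_less_mult_iff)
  have p2y: "0 < PF A2 \<beta> (F y)" "0 < PF B2 \<beta> (G y)"
    using p2x PF_mono[of A2 \<beta> "F x" "F y"] PF_mono[of B2 \<beta> "G x" "G y"] pb nF nG Fxy Gxy by force+
  have r1: "PF A1 \<alpha> (F x) / PF A2 \<beta> (F x) \<le> PF A1 \<alpha> (F y) / PF A2 \<beta> (F y)"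
    by (rule ratio_mono) (use fin ne sA nF Fxy p2x p2y in auto)
  have r2: "PF B1 \<alpha> (G x) / PF B2 \<beta> (G x) \<le> PF B1 \<alpha> (G y) / PF B2 \<beta> (G y)"
    by (rule ratio_mono) (use fin ne sB nG Gxy p2x p2y in auto)
  have "(PF A1 \<alpha> (F x) / PF A2 \<beta> (F x)) * (PF B1 \<alpha> (G x) / PF B2 \<beta> (G x))
     \<le> (PF A1 \<alpha> (F y) / PF A2 \<beta> (F y)) * (PF B1 \<alpha> (G y) / PF B2 \<beta> (G y))"
    by (rule mult_mono[OF r1 r2]) (auto intro!: divide_nonneg_nonneg PF_nonneg)
  then show "cdf_ratio (\<lambda>x. PF A1 \<alpha> (F x) * PF B1 \<alpha> (G x)) (\<lambda>x. PF A2 \<beta> (F x) * PF B2 \<beta> (G x)) x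
    \<le> cdf_ratio (\<lambda>x. PF A1 \<alpha> (F x) * PF B1 \<alpha> (G x)) (\<lambda>x. PF A2 \<beta> (F x) * PF B2 \<beta> (G x)) y"
    using p2x p2y unfolding cdf_ratio_def by simp
qed

lemma max_cdf_prod:
  assumes "prob_space M" "prob_space.indep_vars M (\<lambda>_. borel) X {1..n}" "1 \<le> n"
  shows "max_cdf M X n x = (\<Prod>i\<in>{1..n}. measure M {\<omega>\<in>space M. X i \<omega> \<le> x})"
proof -
  interpret prob_space M by fact
  have ind: "indep_sets (\<lambda>i. { X i -` A \<inter> space M | A. A \<in> sets borel}) {1..n}"
    using assms(2) unfolding indep_vars_def2 by auto
  have eq: "{\<omega> \<in> space M. Max ((\<lambda>i. X i \<omega>) ` {1..n}) \<le> x} = (\<Inter>i\<in>{1..n}. X i -` {..x} \<inter> space M)"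
    using assms(3) by (auto simp: Max_le_iff)
  have "prob (\<Inter>i\<in>{1..n}. X i -` {..x} \<inter> space M) = (\<Prod>i\<in>{1..n}. prob (X i -` {..x} \<inter> space M))"
    by (rule indep_setsD[OF ind]) (use assms(3) in \<open>auto intro!: exI[of _ "{..x}"]\<close>)
  moreover have "\<And>i. X i -` {..x} \<inter> space M = {\<omega>\<in>space M. X i \<omega> \<le> x}" by auto
  ultimately show ?thesis unfolding max_cdf_def eq by simp
qed

lemma cdf_props: assumes "abs_cont_cdf F f" shows "mono F" "\<And>x. 0 \<le> F x"
proof -
  have fm: "f \<in> borel_measurable lborel" and nn: "\<And>x. 0 \<le> f x" and int: "integrable lborel f"
   and Fd: "\<And>x. F x = (LINT t:{..x}|lborel. f t)"
    using assms unfolding abs_cont_cdf_def by auto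
  show "mono F"
  proof (rule monoI)
    fix x y :: real assume "x \<le> y"
    then show "F x \<le> F y" unfolding Fd set_lebesgue_integral_def
      using nn by (intro integral_mono integrable_mult_indicator int) (auto split: split_indicator)
  qed
  show "\<And>x. 0 \<le> F x" unfolding Fd set_lebesgue_integral_def
    using nn by (intro integral_nonneg_AE) (auto split: split_indicator)
qed

theorem theorem4:
  fixes M :: "'a measure" and N :: "'b measure"
    and X :: "nat \<Rightarrow> 'a \<Rightarrow> real" and Y :: "nat \<Rightarrow> 'b \<Rightarrow> real"
    and F G f g :: "real \<Rightarrow> real" and \<alpha> \<beta> :: "nat \<Rightarrow> real"
    and n1 n2 p1 p2 :: nat
  assumes "abs_cont_cdf F f" and "abs_cont_cdf G g"
    and "prob_space M" and "prob_space N"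
    and "1 \<le> n1" and "1 \<le> n2" and "p1 \<le> n1" and "p2 \<le> n2"
    and "\<And>i. i \<in> {1..n1} \<Longrightarrow> 0 < \<alpha> i"
    and "\<And>i. i \<in> {1..n2} \<Longrightarrow> 0 < \<beta> i"
    and "\<And>i. i \<in> {1..n1} \<Longrightarrow> X i \<in> borel_measurable M"
    and "\<And>i. i \<in> {1..n2} \<Longrightarrow> Y i \<in> borel_measurable N"
    and "prob_space.indep_vars M (\<lambda>_. borel) X {1..n1}"
    and "prob_space.indep_vars N (\<lambda>_. borel) Y {1..n2}"
    and "\<And>i x. i \<in> {1..p1} \<Longrightarrow> measure M {\<omega> \<in> space M. X i \<omega> \<le> x} = F x powr \<alpha> i"
    and "\<And>i x. i \<in> {p1+1..n1} \<Longrightarrow> measure M {\<omega> \<in> space M. X i \<omega> \<le> x} = G x powr \<alpha> i"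
    and "\<And>i x. i \<in> {1..p2} \<Longrightarrow> measure N {\<omega> \<in> space N. Y i \<omega> \<le> x} = F x powr \<beta> i"
    and "\<And>i x. i \<in> {p2+1..n2} \<Longrightarrow> measure N {\<omega> \<in> space N. Y i \<omega> \<le> x} = G x powr \<beta> i"
    and "(\<Sum>i=1..p1. \<alpha> i) > (\<Sum>i=1..p2. \<beta> i)"
    and "(\<Sum>i=p1+1..n1. \<alpha> i) > (\<Sum>i=p2+1..n2. \<beta> i)"
  shows "rh_le (max_cdf N Y n2) (max_cdf M X n1)"
proof -
  have s1: "{1..n1} = {1..p1} \<union> {p1+1..n1}" "{1..p1} \<inter> {p1+1..n1} = {}" using assms(7) by auto
  have s2: "{1..n2} = {1..p2} \<union> {p2+1..n2}" "{1..p2} \<inter> {p2+1..n2} = {}" using assms(8) by auto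
  have MX: "max_cdf M X n1 = (\<lambda>x. PF {1..p1} \<alpha> (F x) * PF {p1+1..n1} \<alpha> (G x))"
  proof
    fix x
    have "max_cdf M X n1 x = (\<Prod>i\<in>{1..n1}. measure M {\<omega>\<in>space M. X i \<omega> \<le> x})"
      using max_cdf_prod[OF assms(3,13,5)] .
    also have "\<dots> = (\<Prod>i\<in>{1..p1}. measure M {\<omega>\<in>space M. X i \<omega> \<le> x}) *
        (\<Prod>i\<in>{p1+1..n1}. measure M {\<omega>\<in>space M. X i \<omega> \<le> x})"
      unfolding s1(1) by (rule prod.union_disjoint) (use s1 in auto)
    also have "\<dots> = PF {1..p1} \<alpha> (F x) * PF {p1+1..n1} \<alpha> (G x)"
      unfolding PF_def using assms(15,16) by simp
    finally show "max_cdf M X n1 x = PF {1..p1} \<alpha> (F x) * PF {p1+1..n1} \<alpha> (G x)" .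
  qed
  have NY: "max_cdf N Y n2 = (\<lambda>x. PF {1..p2} \<beta> (F x) * PF {p2+1..n2} \<beta> (G x))"
  proof
    fix x
    have "max_cdf N Y n2 x = (\<Prod>i\<in>{1..n2}. measure N {\<omega>\<in>space N. Y i \<omega> \<le> x})"
      using max_cdf_prod[OF assms(4,14,6)] .
    also have "\<dots> = (\<Prod>i\<in>{1..p2}. measure N {\<omega>\<in>space N. Y i \<omega> \<le> x}) *
        (\<Prod>i\<in>{p2+1..n2}. measure N {\<omega>\<in>space N. Y i \<omega> \<le> x})"
      unfolding s2(1) by (rule prod.union_disjoint) (use s2 in auto)
    also have "\<dots> = PF {1..p2} \<beta> (F x) * PF {p2+1..n2} \<beta> (G x)"
      unfolding PF_def using assms(17,18) by simp
    finally show "max_cdf N Y n2 x = PF {1..p2} \<beta> (F x) * PF {p2+1..n2} \<beta> (G x)" .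
  qed
  have b0: "0 \<le> (\<Sum>i=1..p2. \<beta> i)" "0 \<le> (\<Sum>i=p2+1..n2. \<beta> i)"
    using assms(8,10) by (auto intro!: sum_nonneg simp: order.strict_implies_order)
  have ne: "{1..p1} \<noteq> {}" "{p1+1..n1} \<noteq> {}"
  proof -
    have "(\<Sum>i=1..p1. \<alpha> i) \<noteq> 0" "(\<Sum>i=p1+1..n1. \<alpha> i) \<noteq> 0" using b0 assms(19,20) by linarith+
    then show "{1..p1} \<noteq> {}" "{p1+1..n1} \<noteq> {}" by (metis sum.empty)+
  qed
  show ?thesis unfolding MX NY
    by (rule key[OF cdf_props(1)[OF assms(1)] cdf_props(1)[OF assms(2)]
          cdf_props(2)[OF assms(1)] cdf_props(2)[OF assms(2)] _ _ _ _ ne])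
       (use assms(7,8,9,10,19,20) in auto)
qed

end
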